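(* Let $G$ be a group, $K$ a zero-sum-free semifield, and $V$ a representation of $G$ over $K$. Then $V$ is indecomposable if and only if $G$ acts transitively on the set of basis lines of $V$. In addition, any representation $V$ of $G$ over $K$ may be uniquely decomposed as a direct sum of indecomposable representations.
   Context: All semirings are commutative. A semifield is a semiring whose nonzero elements form a multiplicative group; it is zero-sum-free if $a+b=0$ implies $a=b=0$. A representation of $G$ over $K$ is a $K$-linear action of $G$ on a free module $K^n$; a subrepresentation is a $G$-stable submodule; $V$ is indecomposable if it cannot be written as a direct sum of nontrivial subrepresentations. A basis line of a free $K$-module is a submodule spanned by a single vector of a basis; the set of basis lines does not depend on the basis, and $G$ acts on it by $g\cdot\mathrm{span}(v)=\mathrm{span}(gv)$. *)

theory Defs
  imports "HOL-Algebra.Group" "HOL-Library.Function_Algebras"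
begin

definition semifield :: "'k::comm_semiring_1 itself \<Rightarrow> bool" where
  "semifield _ \<longleftrightarrow> (0::'k) \<noteq> 1 \<and> (\<forall>a::'k. a \<noteq> 0 \<longrightarrow> (\<exists>b. a * b = 1))"

definition zero_sum_free :: "'k::comm_semiring_1 itself \<Rightarrow> bool" where
  "zero_sum_free _ \<longleftrightarrow> (\<forall>a b::'k. a + b = 0 \<longrightarrow> a = 0 \<and> b = 0)"

text \<open>The free module K^n is modelled as functions 'n \<Rightarrow> 'k with 'n a finite type;
  addition and zero are pointwise.\<close>

definition smult_vec :: "'k::comm_semiring_1 \<Rightarrow> ('n \<Rightarrow> 'k) \<Rightarrow> ('n \<Rightarrow> 'k)" where
  "smult_vec c v = (\<lambda>i. c * v i)"

definition submodule :: "('n \<Rightarrow> 'k::comm_semiring_1) set \<Rightarrow> bool" where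
  "submodule W \<longleftrightarrow> 0 \<in> W \<and> (\<forall>u\<in>W. \<forall>v\<in>W. u + v \<in> W) \<and> (\<forall>c. \<forall>v\<in>W. smult_vec c v \<in> W)"

definition lin_map :: "(('n \<Rightarrow> 'k::comm_semiring_1) \<Rightarrow> ('n \<Rightarrow> 'k)) \<Rightarrow> bool" where
  "lin_map f \<longleftrightarrow> (\<forall>u v. f (u + v) = f u + f v) \<and> (\<forall>c v. f (smult_vec c v) = smult_vec c (f v))"

definition is_basis :: "('n \<Rightarrow> 'k::comm_semiring_1) set \<Rightarrow> ('n \<Rightarrow> 'k) set \<Rightarrow> bool" where
  "is_basis W B \<longleftrightarrow> finite B \<and> B \<subseteq> W \<and>
     (\<forall>w\<in>W. \<exists>!c. (\<forall>b. b \<notin> B \<longrightarrow> c b = 0) \<and> w = (\<Sum>b\<in>B. smult_vec (c b) b))"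

definition free_submodule :: "('n \<Rightarrow> 'k::comm_semiring_1) set \<Rightarrow> bool" where
  "free_submodule W \<longleftrightarrow> submodule W \<and> (\<exists>B. is_basis W B)"

definition line :: "('n \<Rightarrow> 'k::comm_semiring_1) \<Rightarrow> ('n \<Rightarrow> 'k) set" where
  "line v = {smult_vec c v | c. True}"

definition basis_lines :: "('n \<Rightarrow> 'k::comm_semiring_1) set set" where
  "basis_lines = {line b | b. \<exists>B. is_basis (UNIV :: ('n \<Rightarrow> 'k) set) B \<and> b \<in> B}"

definition representation ::
  "('g, 'm) monoid_scheme \<Rightarrow> ('g \<Rightarrow> ('n \<Rightarrow> 'k::comm_semiring_1) \<Rightarrow> ('n \<Rightarrow> 'k)) \<Rightarrow> bool" where
  "representation G \<rho> \<longleftrightarrow> group G \<and> (\<forall>g\<in>carrier G. lin_map (\<rho> g)) \<and> \<rho> \<one>\<^bsub>G\<^esub> = id \<and>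
     (\<forall>g\<in>carrier G. \<forall>h\<in>carrier G. \<rho> (g \<otimes>\<^bsub>G\<^esub> h) = \<rho> g \<circ> \<rho> h)"

definition G_stable :: "('g, 'm) monoid_scheme \<Rightarrow> ('g \<Rightarrow> ('n \<Rightarrow> 'k) \<Rightarrow> ('n \<Rightarrow> 'k)) \<Rightarrow> ('n \<Rightarrow> 'k) set \<Rightarrow> bool" where
  "G_stable G \<rho> W \<longleftrightarrow> (\<forall>g\<in>carrier G. \<rho> g ` W \<subseteq> W)"

definition subrep :: "('g, 'm) monoid_scheme \<Rightarrow> ('g \<Rightarrow> ('n \<Rightarrow> 'k::comm_semiring_1) \<Rightarrow> ('n \<Rightarrow> 'k)) \<Rightarrow> ('n \<Rightarrow> 'k) set \<Rightarrow> bool" where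
  "subrep G \<rho> W \<longleftrightarrow> submodule W \<and> G_stable G \<rho> W"

definition direct_sum2 :: "('n \<Rightarrow> 'k::comm_semiring_1) set \<Rightarrow> ('n \<Rightarrow> 'k) set \<Rightarrow> ('n \<Rightarrow> 'k) set \<Rightarrow> bool" where
  "direct_sum2 W W1 W2 \<longleftrightarrow> W1 \<subseteq> W \<and> W2 \<subseteq> W \<and>
     (\<forall>w\<in>W. \<exists>!p. fst p \<in> W1 \<and> snd p \<in> W2 \<and> w = fst p + snd p)"

definition direct_sum :: "('n \<Rightarrow> 'k::comm_semiring_1) set \<Rightarrow> ('n \<Rightarrow> 'k) set set \<Rightarrow> bool" where
  "direct_sum W D \<longleftrightarrow> finite D \<and> (\<forall>U\<in>D. U \<subseteq> W) \<and>
     (\<forall>w\<in>W. \<exists>!f. (\<forall>U\<in>D. f U \<in> U) \<and> (\<forall>U. U \<notin> D \<longrightarrow> f U = 0) \<and> w = (\<Sum>U\<in>D. f U))"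

definition indecomposable :: "('g, 'm) monoid_scheme \<Rightarrow> ('g \<Rightarrow> ('n \<Rightarrow> 'k::comm_semiring_1) \<Rightarrow> ('n \<Rightarrow> 'k)) \<Rightarrow> ('n \<Rightarrow> 'k) set \<Rightarrow> bool" where
  "indecomposable G \<rho> W \<longleftrightarrow> W \<noteq> {0} \<and>
     \<not> (\<exists>W1 W2. subrep G \<rho> W1 \<and> subrep G \<rho> W2 \<and> W1 \<noteq> {0} \<and> W2 \<noteq> {0} \<and> direct_sum2 W W1 W2)"

definition transitive_on_basis_lines :: "('g, 'm) monoid_scheme \<Rightarrow> ('g \<Rightarrow> ('n \<Rightarrow> 'k::comm_semiring_1) \<Rightarrow> ('n \<Rightarrow> 'k)) \<Rightarrow> bool" where
  "transitive_on_basis_lines G \<rho> \<longleftrightarrow>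
     (\<forall>L1\<in>basis_lines. \<forall>L2\<in>basis_lines. \<exists>g\<in>carrier G. \<rho> g ` L1 = (L2 :: ('n \<Rightarrow> 'k) set))"

end

theory Submission imports Defs begin

lemma sum_fun_app: "(\<Sum>x\<in>A. f x) (i::'a) = (\<Sum>x\<in>A. f x i)"
  by (induction A rule: infinite_finite_induct) auto

definition ev :: "'n \<Rightarrow> 'n \<Rightarrow> 'k::comm_semiring_1" where
  "ev i = (\<lambda>j. if j = i then 1 else 0)"

definition WS :: "'n set \<Rightarrow> ('n \<Rightarrow> 'k::comm_semiring_1) set" where
  "WS S = {v. \<forall>j. j \<notin> S \<longrightarrow> v j = 0}"

lemma smult_app[simp]: "smult_vec c v j = c * v j"
  by (simp add: smult_vec_def)

lemma smult_smult: "smult_vec a (smult_vec b v) = smult_vec (a*b) v"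
  by (auto simp: smult_vec_def mult.assoc)

lemma smult_one[simp]: "smult_vec 1 v = v" by (simp add: smult_vec_def)
lemma smult_zero_vec[simp]: "smult_vec c 0 = 0" by (simp add: smult_vec_def fun_eq_iff)
lemma smult_zero_sc[simp]: "smult_vec 0 v = 0" by (simp add: smult_vec_def fun_eq_iff)

lemma ev_app: "ev i j = (if j = i then 1 else 0)" by (simp add: ev_def)

lemma expand_WS:
  fixes v :: "'n::finite \<Rightarrow> 'k::comm_semiring_1"
  assumes "v \<in> WS S"
  shows "v = (\<Sum>j\<in>S. smult_vec (v j) (ev j))"
proof
  fix k
  have "(\<Sum>j\<in>S. smult_vec (v j) (ev j)) k = (\<Sum>j\<in>S. if k = j then v j else 0)"
    unfolding sum_fun_app by (rule sum.cong) (auto simp: ev_app)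
  also have "\<dots> = v k" using assms by (auto simp: WS_def)
  finally show "v k = (\<Sum>j\<in>S. smult_vec (v j) (ev j)) k" by simp
qed

lemma expand_UNIV:
  fixes v :: "'n::finite \<Rightarrow> 'k::comm_semiring_1"
  shows "v = (\<Sum>j\<in>UNIV. smult_vec (v j) (ev j))"
  by (rule expand_WS) (simp add: WS_def)

lemma submodule_WS: "submodule (WS S)"
  by (auto simp: submodule_def WS_def)

lemma submodule_sum:
  assumes "submodule W" "\<And>x. x \<in> A \<Longrightarrow> g x \<in> W"
  shows "sum g A \<in> W"
  using assms(2)
proof (induction A rule: infinite_finite_induct)
  case (infinite A) then show ?case using assms(1) by (metis sum.infinite submodule_def)
next
  case empty then show ?case using assms(1) by (metis sum.empty submodule_def)
next
  case (insert x F)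
  have "g x \<in> W" "sum g F \<in> W" using insert by auto
  then show ?case using assms(1) insert(1,2) unfolding submodule_def by (simp only: sum.insert[OF insert(1,2)])
qed

lemma submodule_smult: "submodule W \<Longrightarrow> v \<in> W \<Longrightarrow> smult_vec c v \<in> W"
  by (simp add: submodule_def)

lemma lin_zero: "lin_map f \<Longrightarrow> f 0 = 0"
  unfolding lin_map_def by (metis smult_zero_sc)

lemma lin_sum: "lin_map f \<Longrightarrow> f (sum g A) = (\<Sum>x\<in>A. f (g x))"
  by (induction A rule: infinite_finite_induct) (auto simp: lin_zero lin_map_def)

lemma lin_smult: "lin_map f \<Longrightarrow> f (smult_vec c v) = smult_vec c (f v)"
  by (simp add: lin_map_def)

lemma lin_expand:
  fixes v :: "'n::finite \<Rightarrow> 'k::comm_semiring_1"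
  assumes "lin_map f"
  shows "f v = (\<Sum>j\<in>UNIV. smult_vec (v j) (f (ev j)))"
  by (subst expand_UNIV[of v]) (simp add: lin_sum[OF assms] lin_smult[OF assms])

lemma sf_inv: "semifield TYPE('k::comm_semiring_1) \<Longrightarrow> (a::'k) \<noteq> 0 \<Longrightarrow> \<exists>b. b * a = 1"
  unfolding semifield_def by (metis mult.commute)

lemma sf_nz: "semifield TYPE('k::comm_semiring_1) \<Longrightarrow> (a::'k) \<noteq> 0 \<Longrightarrow> b \<noteq> 0 \<Longrightarrow> a * b \<noteq> 0"
  by (metis sf_inv mult.assoc mult_1 mult_zero_right)

lemma sf_01: "semifield TYPE('k::comm_semiring_1) \<Longrightarrow> (0::'k) \<noteq> 1"
  unfolding semifield_def by simp

lemma sf_cancel: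
  assumes "semifield TYPE('k::comm_semiring_1)" "submodule W" "(a::'k) \<noteq> 0" "smult_vec a v \<in> W"
  shows "v \<in> W"
proof -
  obtain b where "b * a = 1" using sf_inv[OF assms(1,3)] by blast
  then have "v = smult_vec b (smult_vec a v)" by (simp add: smult_smult)
  then show ?thesis using assms(2,4) submodule_smult by metis
qed

lemma zsf_sum:
  assumes "zero_sum_free TYPE('k::comm_semiring_1)" "finite A" "sum (g::_\<Rightarrow>'k) A = 0" "x \<in> A"
  shows "g x = 0"
  using assms(2-)
proof (induction A rule: finite_induct)
  case empty then show ?case by simp
next
  case (insert y F)
  then have "g y + sum g F = 0" by simp
  then have "g y = 0 \<and> sum g F = 0" using assms(1) unfolding zero_sum_free_def by blast
  then show ?case using insert by auto
qed


lemma zsf_vec: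
  assumes "zero_sum_free TYPE('k::comm_semiring_1)" "finite A"
    "sum (g::_\<Rightarrow>'n\<Rightarrow>'k) A = 0" "x \<in> A"
  shows "g x = 0"
proof
  fix m
  have "(\<Sum>y\<in>A. g y m) = 0" using assms(3) by (metis sum_fun_app zero_fun_apply)
  then show "g x m = 0 m" using zsf_sum[OF assms(1,2) _ assms(4), of "\<lambda>y. g y m"] by simp
qed

lemma mono_gen:
  fixes f h :: "('n::finite \<Rightarrow> 'k::comm_semiring_1) \<Rightarrow> ('n \<Rightarrow> 'k)"
  assumes sf: "semifield TYPE('k)" and zsf: "zero_sum_free TYPE('k)"
    and lf: "lin_map f" and lh: "lin_map h"
    and hf: "\<And>v. h (f v) = v" and fh: "\<And>v. f (h v) = v"
  shows "\<exists>k c. c \<noteq> 0 \<and> f (ev j) = smult_vec c (ev k)"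
proof -
  have ev_nz: "ev i \<noteq> (0::'n\<Rightarrow>'k)" for i
    using sf_01[OF sf] by (metis ev_app zero_fun_apply)
  have fnz: "f v \<noteq> 0" if "v \<noteq> 0" for v using that hf lin_zero[OF lh] by metis
  have hnz: "h v \<noteq> 0" if "v \<noteq> 0" for v using that fh lin_zero[OF lf] by metis
  have K: "h (ev l) = smult_vec (h (ev l) j) (ev j)" if "f (ev j) l \<noteq> 0" for l
  proof
    fix m
    show "h (ev l) m = smult_vec (h (ev l) j) (ev j) m"
    proof (cases "m = j")
      case True then show ?thesis by (simp add: ev_app)
    next
      case False
      have "ev j = h (f (ev j))" using hf by simp
      also have "\<dots> = (\<Sum>l\<in>UNIV. smult_vec (f (ev j) l) (h (ev l)))" by (rule lin_expand[OF lh])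
      finally have "ev j m = (\<Sum>l\<in>UNIV. smult_vec (f (ev j) l) (h (ev l))) m" by simp
      then have "(\<Sum>l\<in>UNIV. f (ev j) l * h (ev l) m) = 0"
        using False by (simp add: sum_fun_app ev_app)
      then have "f (ev j) l * h (ev l) m = 0"
        using zsf_sum[OF zsf, of UNIV "\<lambda>l. f (ev j) l * h (ev l) m" l] by simp
      then have "h (ev l) m = 0" using sf_nz[OF sf that] by metis
      then show ?thesis using False by (simp add: ev_app)
    qed
  qed
  have "\<exists>k. f (ev j) k \<noteq> 0"
  proof (rule ccontr)
    assume "\<nexists>k. f (ev j) k \<noteq> 0"
    then have "f (ev j) = 0" by (simp add: fun_eq_iff)
    then show False using fnz[OF ev_nz[of j]] by simp
  qed
  then obtain k where k: "f (ev j) k \<noteq> 0" by blast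
  have zero: "f (ev j) k' = 0" if "k' \<noteq> k" for k'
  proof (rule ccontr)
    assume k': "f (ev j) k' \<noteq> 0"
    define a where "a = h (ev k) j"
    define a' where "a' = h (ev k') j"
    have ha: "h (ev k) = smult_vec a (ev j)" using K[OF k] a_def by simp
    have ha': "h (ev k') = smult_vec a' (ev j)" using K[OF k'] a'_def by simp
    have a': "a' \<noteq> 0" using hnz[OF ev_nz[of k']] ha' by auto
    have "h (smult_vec a' (ev k)) = h (smult_vec a (ev k'))"
      using ha ha' by (simp add: lin_smult[OF lh] smult_smult mult.commute)
    then have "smult_vec a' (ev k) = smult_vec a (ev k')" using fh by metis
    then have "smult_vec a' (ev k) k = smult_vec a (ev k') k" by simp
    then have "a' = 0" using that by (simp add: ev_app)
    then show False using a' by simp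
  qed
  have "f (ev j) = smult_vec (f (ev j) k) (ev k)"
  proof
    fix m show "f (ev j) m = smult_vec (f (ev j) k) (ev k) m"
      using zero[of m] by (cases "m = k") (auto simp: ev_app)
  qed
  then show ?thesis using k by blast
qed


lemma line_smult:
  assumes "semifield TYPE('k::comm_semiring_1)" "(c::'k) \<noteq> 0"
  shows "line (smult_vec c v) = line v"
proof -
  obtain b where b: "b * c = 1" using sf_inv[OF assms] by blast
  show ?thesis unfolding line_def
  proof (safe)
    fix d show "\<exists>d'. smult_vec d (smult_vec c v) = smult_vec d' v \<and> True"
      by (auto simp: smult_smult)
  next
    fix d have "smult_vec d v = smult_vec (d*b) (smult_vec c v)"
      by (simp add: smult_smult mult.assoc b)
    then show "\<exists>d'. smult_vec d v = smult_vec d' (smult_vec c v) \<and> True" by blast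
  qed
qed

lemma line_range: "line v = range (\<lambda>c. smult_vec c v)"
  by (auto simp: line_def)

lemma lin_line:
  assumes "lin_map f" shows "f ` line v = line (f v)"
proof -
  have e: "(\<lambda>c. f (smult_vec c v)) = (\<lambda>c. smult_vec c (f v))"
    by (rule ext) (rule lin_smult[OF assms])
  show ?thesis by (simp only: line_range image_image e)
qed

lemma ev_WS: "ev j \<in> WS S \<longleftrightarrow> j \<in> S"
  by (auto simp: WS_def ev_app)

lemma WS_UNIV: "WS UNIV = UNIV" by (auto simp: WS_def)

lemma ds2_WS:
  assumes "A \<inter> B = {}"
  shows "direct_sum2 (WS (A \<union> B)) (WS A) (WS B)"
  unfolding direct_sum2_def
proof (intro conjI ballI)
  show "WS A \<subseteq> WS (A \<union> B)" "WS B \<subseteq> WS (A \<union> B)" by (auto simp: WS_def)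
next
  fix w :: "'a \<Rightarrow> 'b" assume w: "w \<in> WS (A \<union> B)"
  let ?p = "(\<lambda>j. if j \<in> A then w j else 0, \<lambda>j. if j \<in> B then w j else 0)"
  show "\<exists>!p. fst p \<in> WS A \<and> snd p \<in> WS B \<and> w = fst p + snd p"
  proof (rule ex1I[of _ ?p])
    show "fst ?p \<in> WS A \<and> snd ?p \<in> WS B \<and> w = fst ?p + snd ?p"
      using w assms by (auto simp: WS_def fun_eq_iff)
  next
    fix p assume p: "fst p \<in> WS A \<and> snd p \<in> WS B \<and> w = fst p + snd p"
    have "fst p = fst ?p"
    proof
      fix j show "fst p j = fst ?p j"
        using p assms by (cases "j \<in> A") (auto simp: WS_def)
    qed
    moreover have "snd p = snd ?p"
    proof
      fix j show "snd p j = snd ?p j"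
        using p assms by (cases "j \<in> B") (auto simp: WS_def)
    qed
    ultimately show "p = ?p" by (simp add: prod_eq_iff)
  qed
qed

lemma basis_WS:
  fixes S :: "'n::finite set"
  assumes "semifield TYPE('k::comm_semiring_1)"
  shows "is_basis (WS S :: ('n \<Rightarrow> 'k) set) (ev ` S)"
  unfolding is_basis_def
proof (intro conjI ballI)
  show "finite (ev ` S)" by simp
  show "ev ` S \<subseteq> WS S" by (auto simp: ev_WS)
next
  have inj: "inj (ev :: 'n \<Rightarrow> 'n \<Rightarrow> 'k)"
    using sf_01[OF assms] by (auto simp: inj_def ev_def fun_eq_iff split: if_splits)
  fix w :: "'n \<Rightarrow> 'k" assume w: "w \<in> WS S"
  let ?P = "\<lambda>c. (\<forall>b. b \<notin> ev ` S \<longrightarrow> c b = 0) \<and> w = (\<Sum>b\<in>ev ` S. smult_vec (c b) b)"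
  have re: "(\<Sum>b\<in>ev ` S. smult_vec (c b) b) = (\<Sum>j\<in>S. smult_vec (c (ev j)) (ev j))" for c :: "('n \<Rightarrow> 'k) \<Rightarrow> 'k"
  proof -
    have "inj_on (ev :: 'n \<Rightarrow> 'n \<Rightarrow> 'k) S" using inj by (meson inj_on_subset subset_UNIV)
    from sum.reindex[OF this, of "\<lambda>b. smult_vec (c b) b"] show ?thesis by (simp add: o_def)
  qed
  have char: "?P c \<longleftrightarrow> (\<forall>b. b \<notin> ev ` S \<longrightarrow> c b = 0) \<and> (\<forall>j\<in>S. c (ev j) = w j)" for c :: "('n \<Rightarrow> 'k) \<Rightarrow> 'k"
  proof -
    have "w = (\<Sum>j\<in>S. smult_vec (c (ev j)) (ev j)) \<longleftrightarrow> (\<forall>j\<in>S. c (ev j) = w j)"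
    proof
      assume h: "w = (\<Sum>j\<in>S. smult_vec (c (ev j)) (ev j))"
      show "\<forall>j\<in>S. c (ev j) = w j"
      proof
        fix j assume "j \<in> S"
        have "w j = (\<Sum>i\<in>S. c (ev i) * ev i j)" using h by (simp add: sum_fun_app)
        also have "\<dots> = (\<Sum>i\<in>S. if i = j then c (ev i) else 0)" by (rule sum.cong) (auto simp: ev_app)
        also have "\<dots> = c (ev j)" using \<open>j \<in> S\<close> by simp
        finally show "c (ev j) = w j" by simp
      qed
    next
      assume h: "\<forall>j\<in>S. c (ev j) = w j"
      have "(\<Sum>j\<in>S. smult_vec (c (ev j)) (ev j)) = (\<Sum>j\<in>S. smult_vec (w j) (ev j))"
        using h by simp
      then show "w = (\<Sum>j\<in>S. smult_vec (c (ev j)) (ev j))" using expand_WS[OF w] by simp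
    qed
    then show ?thesis using re by simp
  qed
  let ?c = "\<lambda>b. if b \<in> ev ` S then (\<Sum>j\<in>UNIV. b j * w j) else 0"
  have cev: "?c (ev j) = w j" if "j \<in> S" for j
  proof -
    have "(\<Sum>i\<in>UNIV. ev j i * w i) = (\<Sum>i\<in>UNIV. if i = j then w i else 0)"
      by (rule sum.cong) (auto simp: ev_app)
    then show ?thesis using that by simp
  qed
  show "\<exists>!c. ?P c"
  proof (rule ex1I[of _ ?c])
    show "?P ?c" unfolding char using cev by auto
  next
    fix c assume "?P c"
    then have c: "(\<forall>b. b \<notin> ev ` S \<longrightarrow> c b = 0) \<and> (\<forall>j\<in>S. c (ev j) = w j)" using char by blast
    show "c = ?c"
    proof
      fix b show "c b = ?c b"
        using c cev by (cases "b \<in> ev ` S") auto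
    qed
  qed
qed

lemma basis_char:
  fixes B :: "('n::finite \<Rightarrow> 'k::comm_semiring_1) set"
  assumes sf: "semifield TYPE('k)" and zsf: "zero_sum_free TYPE('k)"
    and B: "is_basis UNIV B" and b: "b \<in> B"
  shows "\<exists>i c. c \<noteq> 0 \<and> b = smult_vec c (ev i)"
proof -
  have fin: "finite B" using B by (simp add: is_basis_def)
  have "\<forall>j. \<exists>c. (\<forall>b. b \<notin> B \<longrightarrow> c b = 0) \<and> ev j = (\<Sum>b\<in>B. smult_vec (c b) b)"
    using B unfolding is_basis_def by blast
  then obtain C where C: "\<And>j. (\<forall>b. b \<notin> B \<longrightarrow> C j b = 0)"
      "\<And>j. ev j = (\<Sum>b\<in>B. smult_vec (C j b) b)" by metis
  have uniq: "\<exists>!c. (\<forall>b'. b' \<notin> B \<longrightarrow> c b' = 0) \<and> b = (\<Sum>b'\<in>B. smult_vec (c b') b')"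
    using B unfolding is_basis_def by blast
  define d where "d = (\<lambda>b'. \<Sum>j\<in>UNIV. b j * C j b')"
  have d1: "\<forall>b'. b' \<notin> B \<longrightarrow> d b' = 0" using C(1) by (simp add: d_def)
  have "(\<Sum>b'\<in>B. smult_vec (d b') b') = (\<Sum>b'\<in>B. \<Sum>j\<in>UNIV. smult_vec (b j) (smult_vec (C j b') b'))"
    by (rule sum.cong) (auto simp: d_def fun_eq_iff sum_fun_app sum_distrib_right mult.assoc)
  also have "\<dots> = (\<Sum>j\<in>UNIV. \<Sum>b'\<in>B. smult_vec (b j) (smult_vec (C j b') b'))"
    by (rule sum.swap)
  also have "\<dots> = (\<Sum>j\<in>UNIV. smult_vec (b j) (\<Sum>b'\<in>B. smult_vec (C j b') b'))"
    by (rule sum.cong) (auto simp: fun_eq_iff sum_fun_app sum_distrib_left)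
  also have "\<dots> = (\<Sum>j\<in>UNIV. smult_vec (b j) (ev j))" using C(2) by simp
  also have "\<dots> = b" using expand_UNIV[of b] by simp
  finally have d2: "b = (\<Sum>b'\<in>B. smult_vec (d b') b')" by simp
  define dl where "dl = (\<lambda>b'. if b' = b then (1::'k) else 0)"
  have dl1: "\<forall>b'. b' \<notin> B \<longrightarrow> dl b' = 0" using b by (simp add: dl_def)
  have "(\<Sum>b'\<in>B. smult_vec (dl b') b') = (\<Sum>b'\<in>B. if b' = b then b else 0)"
    by (rule sum.cong) (auto simp: dl_def)
  also have "\<dots> = b" using b fin by simp
  finally have dl2: "b = (\<Sum>b'\<in>B. smult_vec (dl b') b')" by simp
  have "d = dl" using uniq d1 d2 dl1 dl2 by blast
  then have "d b = 1" by (simp add: dl_def)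
  then have "(\<Sum>j\<in>UNIV. b j * C j b) \<noteq> 0" using sf_01[OF sf] by (simp add: d_def)
  then obtain j where j: "b j * C j b \<noteq> 0" by (meson sum.neutral)
  then have bj: "b j \<noteq> 0" and cj: "C j b \<noteq> 0" by auto
  have "b = smult_vec (b j) (ev j)"
  proof
    fix m show "b m = smult_vec (b j) (ev j) m"
    proof (cases "m = j")
      case True then show ?thesis by (simp add: ev_app)
    next
      case False
      have "(\<Sum>b'\<in>B. C j b' * b' m) = ev j m" using C(2)[of j] by (simp add: sum_fun_app)
      then have "(\<Sum>b'\<in>B. C j b' * b' m) = 0" using False by (simp add: ev_app)
      then have "C j b * b m = 0" using zsf_sum[OF zsf fin _ b, of "\<lambda>b'. C j b' * b' m"] by simp
      then have "b m = 0" using sf_nz[OF sf cj] by metis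
      then show ?thesis using False by (simp add: ev_app)
    qed
  qed
  then show ?thesis using bj by blast
qed


lemma ex1_eq: "\<exists>!x. P x \<Longrightarrow> P a \<Longrightarrow> P b \<Longrightarrow> a = b" by blast

locale rctx =
  fixes G :: "('g, 'm) monoid_scheme"
    and \<rho> :: "'g \<Rightarrow> ('n::finite \<Rightarrow> 'k::comm_semiring_1) \<Rightarrow> ('n \<Rightarrow> 'k)"
  assumes sf: "semifield TYPE('k)"
    and zsf: "zero_sum_free TYPE('k)"
    and rep: "representation G \<rho>"
begin

lemma grp: "group G" using rep by (simp add: representation_def)

lemma lin: "g \<in> carrier G \<Longrightarrow> lin_map (\<rho> g)" using rep by (simp add: representation_def)

lemma inv_l: "g \<in> carrier G \<Longrightarrow> \<rho> (inv\<^bsub>G\<^esub> g) (\<rho> g v) = v"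
proof -
  assume g: "g \<in> carrier G"
  have "\<rho> (inv\<^bsub>G\<^esub> g \<otimes>\<^bsub>G\<^esub> g) = \<rho> (inv\<^bsub>G\<^esub> g) \<circ> \<rho> g"
    using rep g group.inv_closed[OF grp g] by (simp add: representation_def)
  moreover have "\<rho> (inv\<^bsub>G\<^esub> g \<otimes>\<^bsub>G\<^esub> g) = id"
    using rep g group.l_inv[OF grp g] by (simp add: representation_def)
  ultimately show ?thesis by (metis comp_apply id_apply)
qed

lemma inv_r: "g \<in> carrier G \<Longrightarrow> \<rho> g (\<rho> (inv\<^bsub>G\<^esub> g) v) = v"
proof -
  assume g: "g \<in> carrier G"
  have "\<rho> (g \<otimes>\<^bsub>G\<^esub> inv\<^bsub>G\<^esub> g) = \<rho> g \<circ> \<rho> (inv\<^bsub>G\<^esub> g)"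
    using rep g group.inv_closed[OF grp g] by (simp add: representation_def)
  moreover have "\<rho> (g \<otimes>\<^bsub>G\<^esub> inv\<^bsub>G\<^esub> g) = id"
    using rep g group.r_inv[OF grp g] by (simp add: representation_def)
  ultimately show ?thesis by (metis comp_apply id_apply)
qed

lemma ev_nz: "ev i \<noteq> (0::'n\<Rightarrow>'k)"
  using sf_01[OF sf] by (metis ev_app zero_fun_apply)

lemma rho_nz: "g \<in> carrier G \<Longrightarrow> v \<noteq> 0 \<Longrightarrow> \<rho> g v \<noteq> 0"
  by (metis inv_l lin lin_zero group.inv_closed grp)

lemma mono: "g \<in> carrier G \<Longrightarrow> \<exists>k c. c \<noteq> 0 \<and> \<rho> g (ev j) = smult_vec c (ev k)"
  by (rule mono_gen[OF sf zsf lin lin inv_l inv_r]) (auto intro: group.inv_closed[OF grp])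

definition R :: "'n \<Rightarrow> 'n \<Rightarrow> bool" where
  "R i k \<longleftrightarrow> (\<exists>g\<in>carrier G. \<exists>c. c \<noteq> 0 \<and> \<rho> g (ev i) = smult_vec c (ev k))"

lemma R_refl: "R i i"
proof -
  have "\<one>\<^bsub>G\<^esub> \<in> carrier G" using grp by (meson group.is_monoid monoid.one_closed)
  moreover have "\<rho> \<one>\<^bsub>G\<^esub> (ev i) = smult_vec 1 (ev i)" using rep by (simp add: representation_def)
  ultimately show ?thesis unfolding R_def using sf_01[OF sf] by (metis zero_neq_one)
qed

lemma R_sym: assumes "R i k" shows "R k i"
proof -
  obtain g c where g: "g \<in> carrier G" "c \<noteq> 0" "\<rho> g (ev i) = smult_vec c (ev k)"
    using assms R_def by blast
  obtain b where b: "b * c = 1" using sf_inv[OF sf g(2)] by blast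
  have bnz: "b \<noteq> 0" using b sf_01[OF sf] by auto
  have "ev i = \<rho> (inv\<^bsub>G\<^esub> g) (smult_vec c (ev k))" using inv_l[OF g(1)] g(3) by metis
  also have "\<dots> = smult_vec c (\<rho> (inv\<^bsub>G\<^esub> g) (ev k))"
    using lin[OF group.inv_closed[OF grp g(1)]] by (simp add: lin_smult del: smult_app)
  finally have "smult_vec b (ev i) = \<rho> (inv\<^bsub>G\<^esub> g) (ev k)" by (simp add: smult_smult b)
  then show ?thesis unfolding R_def using group.inv_closed[OF grp g(1)] bnz by metis
qed

lemma R_trans: assumes "R i j" "R j k" shows "R i k"
proof -
  obtain g c where g: "g \<in> carrier G" "c \<noteq> 0" "\<rho> g (ev i) = smult_vec c (ev j)"
    using assms(1) R_def by blast
  obtain h d where h: "h \<in> carrier G" "d \<noteq> 0" "\<rho> h (ev j) = smult_vec d (ev k)"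
    using assms(2) R_def by blast
  have "\<rho> (h \<otimes>\<^bsub>G\<^esub> g) (ev i) = \<rho> h (\<rho> g (ev i))" using rep g h by (simp add: representation_def)
  also have "\<dots> = smult_vec c (smult_vec d (ev k))" using g(3) h(3) lin[OF h(1)] by (simp add: lin_smult del: smult_app)
  also have "\<dots> = smult_vec (c*d) (ev k)" by (simp add: smult_smult)
  finally show ?thesis unfolding R_def
    using monoid.m_closed[OF group.is_monoid[OF grp] h(1) g(1)] sf_nz[OF sf g(2) h(2)] by blast
qed

definition closed :: "'n set \<Rightarrow> bool" where
  "closed S \<longleftrightarrow> (\<forall>j\<in>S. \<forall>k. R j k \<longrightarrow> k \<in> S)"

definition cls :: "'n \<Rightarrow> 'n set" where "cls i = {k. R i k}"

lemma closed_cls: "closed (cls i)" unfolding closed_def cls_def using R_trans by blast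
lemma closed_diff_cls: "closed S \<Longrightarrow> closed (S - cls i)"
  unfolding closed_def cls_def using R_trans R_sym by blast
lemma cls_eq: "k \<in> cls i \<Longrightarrow> cls k = cls i"
  unfolding cls_def using R_trans R_sym by blast
lemma in_cls: "i \<in> cls i" unfolding cls_def using R_refl by blast

lemma subrep_WS: assumes "closed S" shows "subrep G \<rho> (WS S)"
  unfolding subrep_def G_stable_def
proof (intro conjI ballI subsetI)
  show "submodule (WS S)" by (rule submodule_WS)
next
  fix g w assume g: "g \<in> carrier G" and "w \<in> \<rho> g ` WS S"
  then obtain v where v: "v \<in> WS S" "w = \<rho> g v" by blast
  have "\<rho> g v = (\<Sum>j\<in>UNIV. smult_vec (v j) (\<rho> g (ev j)))" by (rule lin_expand[OF lin[OF g]])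
  also have "\<dots> \<in> WS S"
  proof (rule submodule_sum[OF submodule_WS])
    fix j :: 'n
    show "smult_vec (v j) (\<rho> g (ev j)) \<in> WS S"
    proof (cases "j \<in> S")
      case True
      obtain k c where kc: "c \<noteq> 0" "\<rho> g (ev j) = smult_vec c (ev k)" using mono[OF g] by blast
      then have "R j k" unfolding R_def using g by blast
      then have "k \<in> S" using assms True closed_def by blast
      then have "ev k \<in> WS S" by (simp add: ev_WS)
      then show ?thesis using kc submodule_smult[OF submodule_WS] by metis
    next
      case False
      then have "v j = 0" using v by (simp add: WS_def)
      then show ?thesis by (simp add: WS_def)
    qed
  qed
  finally show "w \<in> WS S" using v by simp
qed

lemma WS_nz: "i \<in> S \<Longrightarrow> WS S \<noteq> {0::'n\<Rightarrow>'k}"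
  using ev_WS[of i S] ev_nz[of i] by auto

lemma WS_empty: "WS {} = {0::'n\<Rightarrow>'k}"
  by (auto simp: WS_def fun_eq_iff)

lemma ds2_uniq:
  assumes "direct_sum2 W W1 W2" "w \<in> W" "fst p \<in> W1 \<and> snd p \<in> W2 \<and> w = fst p + snd p"
    "fst q \<in> W1 \<and> snd q \<in> W2 \<and> w = fst q + snd q"
  shows "p = q"
  using assms unfolding direct_sum2_def by blast

lemma split_ev:
  fixes W W1 W2 :: "('n \<Rightarrow> 'k) set"
  assumes ds: "direct_sum2 W W1 W2" and s1: "submodule W1" and s2: "submodule W2"
    and e: "ev i \<in> W"
  shows "(ev i \<in> W1 \<or> ev i \<in> W2) \<and> \<not> (ev i \<in> W1 \<and> ev i \<in> W2)"
proof
  obtain p where p: "fst p \<in> W1" "snd p \<in> W2" "ev i = fst p + snd p"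
    using ds e unfolding direct_sum2_def by blast
  have z: "fst p k = 0 \<and> snd p k = 0" if "k \<noteq> i" for k
  proof -
    have "fst p k + snd p k = 0" using p(3) that by (metis ev_app plus_fun_apply)
    then show ?thesis using zsf unfolding zero_sum_free_def by blast
  qed
  have f: "fst p = smult_vec (fst p i) (ev i)"
    by (rule ext) (auto simp: ev_app z)
  have s: "snd p = smult_vec (snd p i) (ev i)"
    by (rule ext) (auto simp: ev_app z)
  have "fst p i + snd p i = 1" using p(3) by (metis ev_app plus_fun_apply)
  then have "fst p i \<noteq> 0 \<or> snd p i \<noteq> 0" using sf_01[OF sf] by auto
  then show "ev i \<in> W1 \<or> ev i \<in> W2"
    using sf_cancel[OF sf s1, of "fst p i" "ev i"] sf_cancel[OF sf s2, of "snd p i" "ev i"] f s p by metis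
next
  show "\<not> (ev i \<in> W1 \<and> ev i \<in> W2)"
  proof
    assume h: "ev i \<in> W1 \<and> ev i \<in> W2"
    have u: "\<exists>!p. fst p \<in> W1 \<and> snd p \<in> W2 \<and> ev i = fst p + snd p"
      using ds e unfolding direct_sum2_def by blast
    have z: "0 \<in> W1" "0 \<in> W2" using s1 s2 unfolding submodule_def by blast+
    have "(ev i :: 'n \<Rightarrow> 'k, 0 :: 'n \<Rightarrow> 'k) = (0, ev i)"
      using ex1_eq[OF u, of "(ev i, 0)" "(0, ev i)"] h z by auto
    then show False using ev_nz by simp
  qed
qed

lemma nz_has_ev:
  fixes W W1 W2 :: "('n \<Rightarrow> 'k) set" and w :: "'n \<Rightarrow> 'k"
  assumes ds: "direct_sum2 W W1 W2" and s1: "submodule W1" and s2: "submodule W2"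
    and w: "w \<in> W1" "w \<noteq> 0"
    and cov: "\<And>j. w j \<noteq> 0 \<Longrightarrow> ev j \<in> W1 \<or> ev j \<in> W2"
  shows "\<exists>j. ev j \<in> W1"
proof (rule ccontr)
  assume "\<nexists>j. ev j \<in> W1"
  then have "w \<in> W2"
    by (subst expand_UNIV[of w], intro submodule_sum[OF s2])
       (metis cov s2 smult_zero_sc submodule_def submodule_smult)
  moreover have "w \<in> W" using ds w unfolding direct_sum2_def by blast
  moreover have "0 \<in> W1" "0 \<in> W2" using s1 s2 unfolding submodule_def by blast+
  ultimately have "(w, 0) = (0, w)" using ds2_uniq[OF ds, of w "(w,0)" "(0,w)"] w by simp
  then show False using w by simp
qed

lemma ds2_sym:
  fixes W W1 W2 :: "('n \<Rightarrow> 'k) set"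
  assumes "direct_sum2 W W1 W2" shows "direct_sum2 W W2 W1"
  unfolding direct_sum2_def
proof (intro conjI ballI)
  show "W2 \<subseteq> W" "W1 \<subseteq> W" using assms unfolding direct_sum2_def by blast+
next
  fix w assume w: "w \<in> W"
  then obtain p where p: "fst p \<in> W1 \<and> snd p \<in> W2 \<and> w = fst p + snd p"
    using assms unfolding direct_sum2_def by blast
  have u: "\<exists>!p. fst p \<in> W1 \<and> snd p \<in> W2 \<and> w = fst p + snd p"
    using assms w unfolding direct_sum2_def by blast
  show "\<exists>!q. fst q \<in> W2 \<and> snd q \<in> W1 \<and> w = fst q + snd q"
  proof (rule ex1I[of _ "prod.swap p"])
    show "fst (prod.swap p) \<in> W2 \<and> snd (prod.swap p) \<in> W1 \<and> w = fst (prod.swap p) + snd (prod.swap p)"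
      using p by (simp add: add.commute)
  next
    fix q assume q: "fst q \<in> W2 \<and> snd q \<in> W1 \<and> w = fst q + snd q"
    have "prod.swap q = p" using ex1_eq[OF u, of "prod.swap q" p] p q by (simp add: add.commute)
    then show "q = prod.swap p" by auto
  qed
qed

lemma indec_WS:
  assumes ne: "i0 \<in> S" and tr: "\<forall>j\<in>S. \<forall>k\<in>S. R j k"
  shows "indecomposable G \<rho> (WS S)"
  unfolding indecomposable_def
proof (rule conjI[OF WS_nz[OF ne]], rule notI)
  assume "\<exists>W1 W2. subrep G \<rho> W1 \<and> subrep G \<rho> W2 \<and> W1 \<noteq> {0} \<and> W2 \<noteq> {0} \<and> direct_sum2 (WS S) W1 W2"
  then obtain W1 W2 where W: "subrep G \<rho> W1" "subrep G \<rho> W2" "W1 \<noteq> {0}" "W2 \<noteq> {0}"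
    and ds: "direct_sum2 (WS S) W1 W2" by blast
  have s1: "submodule W1" and s2: "submodule W2" using W by (auto simp: subrep_def)
  have ds': "direct_sum2 (WS S) W2 W1" using ds2_sym[OF ds] .
  have sub1: "W1 \<subseteq> WS S" and sub2: "W2 \<subseteq> WS S" using ds unfolding direct_sum2_def by auto
  have cov: "ev j \<in> W1 \<or> ev j \<in> W2" if "w \<in> WS S" "w j \<noteq> 0" for w :: "'n \<Rightarrow> 'k" and j
  proof -
    have "j \<in> S" using that by (auto simp: WS_def)
    then have "ev j \<in> WS S" by (simp add: ev_WS)
    then show ?thesis using split_ev[OF ds s1 s2] by blast
  qed
  obtain w1 where w1: "w1 \<in> W1" "w1 \<noteq> 0" using W(3) s1 unfolding submodule_def by blast
  obtain w2 where w2: "w2 \<in> W2" "w2 \<noteq> 0" using W(4) s2 unfolding submodule_def by blast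
  obtain j1 where j1: "ev j1 \<in> W1"
    using nz_has_ev[OF ds s1 s2 w1 cov[OF subsetD[OF sub1 w1(1)]]] by blast
  obtain j2 where j2: "ev j2 \<in> W2"
    using nz_has_ev[OF ds' s2 s1 w2] cov[OF subsetD[OF sub2 w2(1)]] by blast
  have "j1 \<in> S" "j2 \<in> S" using subsetD[OF sub1 j1] subsetD[OF sub2 j2] by (simp_all add: ev_WS)
  then have "R j1 j2" using tr by blast
  then obtain g c where g: "g \<in> carrier G" "c \<noteq> 0" "\<rho> g (ev j1) = smult_vec c (ev j2)"
    unfolding R_def by blast
  have "\<rho> g (ev j1) \<in> W1" using W(1) g(1) j1 unfolding subrep_def G_stable_def by blast
  then have "ev j2 \<in> W1" using sf_cancel[OF sf s1 g(2)] g(3) by simp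
  moreover have "(ev j2 :: 'n \<Rightarrow> 'k) \<in> WS S" using j2 sub2 by blast
  ultimately show False using split_ev[OF ds s1 s2] j2 by blast
qed

lemma indec_cls: "indecomposable G \<rho> (WS (cls i))"
proof -
  have "\<forall>j\<in>cls i. \<forall>k\<in>cls i. R j k" unfolding cls_def using R_sym R_trans by blast
  then show ?thesis by (rule indec_WS[OF in_cls])
qed

lemma closed_UNIV: "closed UNIV" by (simp add: closed_def)

lemma ev_in_line: "v \<in> line v" unfolding line_def by (metis (mono_tags) mem_Collect_eq smult_one)

lemma std_basis: "is_basis (UNIV :: ('n \<Rightarrow> 'k) set) (range ev)"
  using basis_WS[OF sf, of UNIV] by (simp add: WS_UNIV)

lemma line_ev_bl: "line (ev i :: 'n \<Rightarrow> 'k) \<in> basis_lines"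
  unfolding basis_lines_def using std_basis by blast

lemma part1a: assumes "transitive_on_basis_lines G \<rho>" shows "indecomposable G \<rho> UNIV"
proof -
  have allR: "R i k" for i k
  proof -
    obtain g where g: "g \<in> carrier G" "\<rho> g ` line (ev i) = line (ev k)"
      using assms line_ev_bl unfolding transitive_on_basis_lines_def by blast
    then have "\<rho> g (ev i) \<in> line (ev k)" using ev_in_line by blast
    then obtain c where c: "\<rho> g (ev i) = smult_vec c (ev k)" unfolding line_def by blast
    have "c \<noteq> 0" using c rho_nz[OF g(1) ev_nz[of i]] by auto
    then show ?thesis unfolding R_def using g c by blast
  qed
  have "indecomposable G \<rho> (WS UNIV)" by (rule indec_WS[of undefined]) (simp_all add: allR)
  then show ?thesis by (simp add: WS_UNIV)
qed

lemma part1b: assumes "indecomposable G \<rho> UNIV" shows "transitive_on_basis_lines G \<rho>"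
proof -
  have allR: "R i k" for i k
  proof (rule ccontr)
    assume "\<not> R i k"
    then have k: "k \<in> UNIV - cls i" by (simp add: cls_def)
    have ds: "direct_sum2 (WS (cls i \<union> (UNIV - cls i))) (WS (cls i)) (WS (UNIV - cls i))"
      by (rule ds2_WS) blast
    have "cls i \<union> (UNIV - cls i) = UNIV" by blast
    then have ds2: "direct_sum2 UNIV (WS (cls i)) (WS (UNIV - cls i))" using ds WS_UNIV by metis
    have "subrep G \<rho> (WS (cls i))" "subrep G \<rho> (WS (UNIV - cls i))"
      using subrep_WS closed_cls closed_diff_cls closed_UNIV by blast+
    moreover have "WS (cls i) \<noteq> {0::'n\<Rightarrow>'k}" "WS (UNIV - cls i) \<noteq> {0::'n\<Rightarrow>'k}"
      using WS_nz[OF in_cls] WS_nz[OF k] by blast+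
    ultimately show False using assms ds2 unfolding indecomposable_def by blast
  qed
  have lform: "\<exists>i. L = line (ev i)" if L: "L \<in> (basis_lines :: ('n \<Rightarrow> 'k) set set)" for L
  proof -
    obtain b B where Lb: "L = line b" "is_basis UNIV B" "b \<in> B" using L unfolding basis_lines_def by blast
    then obtain i c where ic: "c \<noteq> 0" "b = smult_vec c (ev i)" using basis_char[OF sf zsf] by blast
    have "L = line (ev i)" using Lb(1) ic(2) line_smult[OF sf ic(1)] by simp
    then show ?thesis by blast
  qed
  show ?thesis unfolding transitive_on_basis_lines_def
  proof (intro ballI)
    fix L1 L2 :: "('n \<Rightarrow> 'k) set" assume "L1 \<in> basis_lines" "L2 \<in> basis_lines"
    then obtain i k where ik: "L1 = line (ev i)" "L2 = line (ev k)" using lform by blast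
    obtain g c where g: "g \<in> carrier G" "c \<noteq> 0" "\<rho> g (ev i) = smult_vec c (ev k)"
      using allR[of i k] unfolding R_def by blast
    have "\<rho> g ` L1 = line (smult_vec c (ev k))" using lin_line[OF lin[OF g(1)]] ik g(3) by simp
    also have "\<dots> = L2" using line_smult[OF sf g(2)] ik by simp
    finally show "\<exists>g\<in>carrier G. \<rho> g ` L1 = L2" using g(1) by blast
  qed
qed

lemma sum_restrict:
  fixes D :: "('n \<Rightarrow> 'k) set set" and w :: "'n \<Rightarrow> 'k"
  assumes fin: "finite D" and u: "\<And>j. \<exists>!U. U \<in> D \<and> ev j \<in> U"
  shows "(\<Sum>U\<in>D. (\<lambda>j. if ev j \<in> U then w j else 0)) = w"
proof
  fix j
  obtain U0 where U0: "U0 \<in> D" "ev j \<in> U0" "\<And>U. U \<in> D \<Longrightarrow> ev j \<in> U \<Longrightarrow> U = U0"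
    using u[of j] by blast
  have "(\<Sum>U\<in>D. (\<lambda>j. if ev j \<in> U then w j else 0)) j = (\<Sum>U\<in>D. if ev j \<in> U then w j else 0)"
    by (simp only: sum_fun_app)
  also have "\<dots> = (\<Sum>U\<in>D. if U = U0 then w j else 0)"
  proof (rule sum.cong)
    fix U assume U: "U \<in> D"
    show "(if ev j \<in> U then w j else 0) = (if U = U0 then w j else 0)"
      using U0(3)[OF U] U0(2) by (cases "ev j \<in> U") auto
  qed simp
  also have "\<dots> = w j" using U0(1) fin by simp
  finally show "(\<Sum>U\<in>D. (\<lambda>j. if ev j \<in> U then w j else 0)) j = w j" .
qed

lemma in_WS_of:
  fixes U :: "('n \<Rightarrow> 'k) set"
  assumes ws: "U = WS {j. ev j \<in> U}"
  shows "x \<in> U \<longleftrightarrow> (\<forall>j. ev j \<notin> U \<longrightarrow> x j = 0)"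
proof -
  define S where "S = {j. ev j \<in> U}"
  have U: "U = WS S" using ws unfolding S_def .
  have 1: "x \<in> U \<longleftrightarrow> x \<in> WS S" using U by simp
  have 2: "x \<in> WS S \<longleftrightarrow> (\<forall>j. j \<notin> S \<longrightarrow> x j = 0)" by (simp add: WS_def)
  show ?thesis using 1 2 by (simp add: S_def)
qed

lemma DS_gen:
  fixes D :: "('n \<Rightarrow> 'k) set set"
  assumes fin: "finite D" and ws: "\<And>U. U \<in> D \<Longrightarrow> U = WS {j. ev j \<in> U}"
    and u: "\<And>j. \<exists>!U. U \<in> D \<and> ev j \<in> U"
  shows "direct_sum UNIV D"
  unfolding direct_sum_def
proof (intro conjI ballI)
  show "finite D" by fact
next
  fix U assume "U \<in> D" show "U \<subseteq> UNIV" by simp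
next
  fix w :: "'n \<Rightarrow> 'k" assume "w \<in> UNIV"
  define f0 where "f0 = (\<lambda>U. if U \<in> D then (\<lambda>j. if ev j \<in> U then w j else 0) else (0::'n\<Rightarrow>'k))"
  have zero: "f U j = 0" if "U \<in> D" "f U \<in> U" "ev j \<notin> U" for f :: "('n\<Rightarrow>'k) set \<Rightarrow> 'n \<Rightarrow> 'k" and U j
    using that(2,3) in_WS_of[OF ws[OF that(1)], of "f U"] by blast
  show "\<exists>!f. (\<forall>U\<in>D. f U \<in> U) \<and> (\<forall>U. U \<notin> D \<longrightarrow> f U = 0) \<and> w = (\<Sum>U\<in>D. f U)"
  proof (rule ex1I[of _ f0])
    have A: "f0 U \<in> U" if "U \<in> D" for U
    proof -
      have "f0 U \<in> U \<longleftrightarrow> (\<forall>j. ev j \<notin> U \<longrightarrow> f0 U j = 0)" by (rule in_WS_of[OF ws[OF that]])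
      then show ?thesis using that by (simp add: f0_def)
    qed
    have B: "\<forall>U. U \<notin> D \<longrightarrow> f0 U = 0" by (simp add: f0_def)
    have "(\<Sum>U\<in>D. f0 U) = (\<Sum>U\<in>D. (\<lambda>j. if ev j \<in> U then w j else 0))"
      by (rule sum.cong) (simp_all add: f0_def)
    then have C: "w = (\<Sum>U\<in>D. f0 U)" using sum_restrict[OF fin u, of w] by simp
    show "(\<forall>U\<in>D. f0 U \<in> U) \<and> (\<forall>U. U \<notin> D \<longrightarrow> f0 U = 0) \<and> w = (\<Sum>U\<in>D. f0 U)"
      using A B C by blast
  next
    fix f assume f: "(\<forall>U\<in>D. f U \<in> U) \<and> (\<forall>U. U \<notin> D \<longrightarrow> f U = 0) \<and> w = (\<Sum>U\<in>D. f U)"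
    show "f = f0"
    proof
      fix U show "f U = f0 U"
      proof (cases "U \<in> D")
        case False then show ?thesis using f by (simp add: f0_def)
      next
        case UD: True
        show ?thesis
        proof
          fix j show "f U j = f0 U j"
          proof (cases "ev j \<in> U")
            case False then show ?thesis using zero[of U f j] UD f by (simp add: f0_def)
          next
            case True
            have "w j = (\<Sum>U'\<in>D. f U') j" using f by simp
            also have "\<dots> = (\<Sum>U'\<in>D. f U' j)" by (simp only: sum_fun_app)
            also have "\<dots> = (\<Sum>U'\<in>D. if U' = U then f U j else 0)"
            proof (rule sum.cong)
              fix U' assume U': "U' \<in> D"
              show "f U' j = (if U' = U then f U j else 0)"
              proof (cases "U' = U")
                case False
                then have "ev j \<notin> U'" using u[of j] U' UD True by blast
                then show ?thesis using zero[of U' f j] U' f False by simp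
              qed simp
            qed simp
            also have "\<dots> = f U j" using UD fin by simp
            finally show ?thesis using True UD by (simp add: f0_def)
          qed
        qed
      qed
    qed
  qed
qed

definition D0 :: "('n \<Rightarrow> 'k) set set" where "D0 = range (\<lambda>i. WS (cls i))"

lemma D0_ws: "U \<in> D0 \<Longrightarrow> U = WS {j. ev j \<in> U}"
proof -
  assume "U \<in> D0"
  then obtain i where U: "U = WS (cls i)" unfolding D0_def by blast
  have "{j. ev j \<in> (WS (cls i) :: ('n \<Rightarrow> 'k) set)} = cls i" by (simp add: ev_WS)
  then show ?thesis using U by simp
qed

lemma D0_u: "\<exists>!U. U \<in> D0 \<and> ev j \<in> U"
proof (rule ex1I[of _ "WS (cls j)"])
  show "WS (cls j) \<in> D0 \<and> ev j \<in> WS (cls j)" by (simp add: D0_def ev_WS in_cls)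
next
  fix U assume U: "U \<in> D0 \<and> ev j \<in> U"
  then obtain i where i: "U = WS (cls i)" unfolding D0_def by blast
  then have "j \<in> cls i" using U ev_WS by metis
  then show "U = WS (cls j)" using i cls_eq by metis
qed

lemma D0_valid: "direct_sum UNIV D0 \<and> (\<forall>W\<in>D0. subrep G \<rho> W \<and> free_submodule W \<and> indecomposable G \<rho> W)"
proof (intro conjI ballI)
  show "direct_sum UNIV D0" by (rule DS_gen[OF _ D0_ws D0_u]) (simp add: D0_def)
next
  fix W assume "W \<in> D0"
  then obtain i where W: "W = WS (cls i)" unfolding D0_def by blast
  show "subrep G \<rho> W" using W subrep_WS closed_cls by simp
  show "free_submodule W" using W basis_WS[OF sf] submodule_WS unfolding free_submodule_def by blast
  show "indecomposable G \<rho> W" using W indec_cls by simp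
qed

lemma Dp:
  fixes D :: "('n \<Rightarrow> 'k) set set"
  assumes ds: "direct_sum UNIV D"
    and val: "\<forall>W\<in>D. subrep G \<rho> W \<and> free_submodule W \<and> indecomposable G \<rho> W"
  shows "D = D0"
proof -
  have fin: "finite D" using ds by (simp add: direct_sum_def)
  have sm: "submodule U" if "U \<in> D" for U using val that by (simp add: subrep_def)
  have ds_u: "\<exists>!f. (\<forall>U\<in>D. f U \<in> U) \<and> (\<forall>U. U \<notin> D \<longrightarrow> f U = 0) \<and> w = (\<Sum>U\<in>D. f U)" for w
    using ds by (simp add: direct_sum_def)
  have a: "\<exists>!U. U \<in> D \<and> ev j \<in> U" for j
  proof -
    obtain f where f: "\<forall>U\<in>D. f U \<in> U" "ev j = (\<Sum>U\<in>D. f U)" using ds_u[of "ev j"] by blast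
    have fk: "(\<Sum>U\<in>D. f U k) = ev j k" for k
    proof -
      have "ev j k = (\<Sum>U\<in>D. f U) k" using f(2) by simp
      then show ?thesis by (simp only: sum_fun_app)
    qed
    have "\<exists>U\<in>D. f U j \<noteq> 0"
    proof (rule ccontr)
      assume "\<not> (\<exists>U\<in>D. f U j \<noteq> 0)"
      then have "(\<Sum>U\<in>D. f U j) = 0" by simp
      then show False using fk[of j] sf_01[OF sf] by (simp add: ev_app)
    qed
    then obtain U where U: "U \<in> D" "f U j \<noteq> 0" by blast
    have "f U k = 0" if "k \<noteq> j" for k
      using zsf_sum[OF zsf fin _ U(1), of "\<lambda>U. f U k"] fk[of k] that by (simp add: ev_app)
    then have fU0: "f U = smult_vec (f U j) (ev j)" by (intro ext) (simp add: ev_app)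
    define a where "a = f U j"
    have a0: "a \<noteq> 0" using U(2) a_def by simp
    have fU: "f U = smult_vec a (ev j)" using fU0 a_def by simp
    have "f U \<in> U" using f(1) U(1) by blast
    then have "smult_vec a (ev j) \<in> U" unfolding fU .
    then have evU: "ev j \<in> U" by (rule sf_cancel[OF sf sm[OF U(1)] a0])
    show ?thesis
    proof (rule ex1I[of _ U])
      show "U \<in> D \<and> ev j \<in> U" using U evU by blast
    next
      fix U2 assume U2: "U2 \<in> D \<and> ev j \<in> U2"
      show "U2 = U"
      proof (rule ccontr)
        assume ne: "U2 \<noteq> U"
        let ?P = "\<lambda>f. (\<forall>U\<in>D. f U \<in> U) \<and> (\<forall>U. U \<notin> D \<longrightarrow> f U = 0) \<and> ev j = (\<Sum>U\<in>D. f U)"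
        have P: "?P (\<lambda>V. if V = X then ev j else 0)" if X: "X \<in> D" "ev j \<in> X" for X
        proof (intro conjI ballI allI impI)
          fix V assume "V \<in> D"
          then show "(if V = X then ev j else 0) \<in> V" using X sm[of V] by (auto simp: submodule_def)
        next
          fix V assume "V \<notin> D" then show "(if V = X then ev j else 0) = 0" using X by auto
        next
          show "ev j = (\<Sum>V\<in>D. if V = X then ev j else 0)" using X fin by simp
        qed
        define f1 where "f1 = (\<lambda>V. if V = U then ev j else (0::'n\<Rightarrow>'k))"
        define f2 where "f2 = (\<lambda>V. if V = U2 then ev j else (0::'n\<Rightarrow>'k))"
        have P1: "?P f1" unfolding f1_def using U(1) evU by (rule P)
        have P2: "?P f2" unfolding f2_def using conjunct1[OF U2] conjunct2[OF U2] by (rule P)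
        have eqf: "f1 = f2" using ds_u[of "ev j"] P1 P2 by (rule ex1_eq[where P = ?P])
        have "f1 U = f2 U" using eqf by simp
        then have "ev j = (if U = U2 then ev j else (0::'n\<Rightarrow>'k))" by (simp add: f1_def f2_def)
        then show False using ne ev_nz by (simp split: if_splits)
      qed
    qed
  qed
  have sup: "WS {j. ev j \<in> U} \<subseteq> U" if U: "U \<in> D" for U
  proof
    fix v :: "'n \<Rightarrow> 'k" assume v: "v \<in> WS {j. ev j \<in> U}"
    have mem: "(\<Sum>j\<in>{j. ev j \<in> U}. smult_vec (v j) (ev j)) \<in> U"
      by (rule submodule_sum[OF sm[OF U]], rule submodule_smult[OF sm[OF U]]) simp
    have eq: "v = (\<Sum>j\<in>{j. ev j \<in> U}. smult_vec (v j) (ev j))" by (rule expand_WS[OF v])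
    show "v \<in> U" by (subst eq) (rule mem)
  qed
  have b: "U = WS {j. ev j \<in> U}" if U: "U \<in> D" for U
  proof
    show "WS {j. ev j \<in> U} \<subseteq> U" using sup[OF U] .
  next
    show "U \<subseteq> WS {j. ev j \<in> U}"
    proof
      fix u assume u: "u \<in> U"
      have "u k = 0" if k: "ev k \<notin> U" for k
      proof -
        obtain U' where U': "U' \<in> D" "ev k \<in> U'" using a[of k] by blast
        have ne: "U' \<noteq> U" using U' k by blast
        let ?P = "\<lambda>f. (\<forall>U\<in>D. f U \<in> U) \<and> (\<forall>U. U \<notin> D \<longrightarrow> f U = 0) \<and> u = (\<Sum>U\<in>D. f U)"
        define f1 where "f1 = (\<lambda>V. if V = U then u else (0::'n\<Rightarrow>'k))"
        define f2 where "f2 = (\<lambda>V. if V \<in> D then (\<lambda>j. if ev j \<in> V then u j else 0) else (0::'n\<Rightarrow>'k))"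
        have P1: "?P f1" unfolding f1_def
        proof (intro conjI ballI allI impI)
          fix V assume "V \<in> D"
          then show "(if V = U then u else 0) \<in> V" using u sm[of V] by (auto simp: submodule_def)
        next
          fix V assume "V \<notin> D" then show "(if V = U then u else 0) = 0" using U by auto
        next
          show "u = (\<Sum>V\<in>D. if V = U then u else 0)" using U fin by simp
        qed
        have P2: "?P f2"
        proof (intro conjI ballI allI impI)
          fix V assume V: "V \<in> D"
          have "(\<lambda>j. if ev j \<in> V then u j else 0) \<in> WS {j. ev j \<in> V}" by (simp add: WS_def)
          then show "f2 V \<in> V" using sup[OF V] V by (auto simp: f2_def)
        next
          fix V assume "V \<notin> D" then show "f2 V = 0" by (simp add: f2_def)
        next
          have "(\<Sum>V\<in>D. f2 V) = (\<Sum>V\<in>D. (\<lambda>j. if ev j \<in> V then u j else 0))"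
            by (rule sum.cong) (simp_all add: f2_def)
          then show "u = (\<Sum>V\<in>D. f2 V)" using sum_restrict[OF fin a, of u] by simp
        qed
        have "f1 = f2" using ds_u[of u] P1 P2 by (rule ex1_eq[where P = ?P])
        then have "f1 U' k = f2 U' k" by simp
        then show "u k = 0" using ne U' by (simp add: f1_def f2_def)
      qed
      then show "u \<in> WS {j. ev j \<in> U}" by (simp add: WS_def)
    qed
  qed
  have c: "closed {j. ev j \<in> U}" if U: "U \<in> D" for U
    unfolding closed_def
  proof (intro ballI allI impI)
    fix j k assume j: "j \<in> {j. ev j \<in> U}" and "R j k"
    then obtain g c where g: "g \<in> carrier G" "c \<noteq> 0" "\<rho> g (ev j) = smult_vec c (ev k)"
      unfolding R_def by blast
    have "subrep G \<rho> U" using val U by blast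
    then have "\<rho> g ` U \<subseteq> U" using g(1) unfolding subrep_def G_stable_def by blast
    moreover have "ev j \<in> U" using j by simp
    ultimately have "\<rho> g (ev j) \<in> U" by blast
    then have "ev k \<in> U" using sf_cancel[OF sf sm[OF U] g(2)] g(3) by simp
    then show "k \<in> {j. ev j \<in> U}" by simp
  qed
  have e: "{j. ev j \<in> U} = cls i" if U: "U \<in> D" and i: "ev i \<in> U" for U i
  proof -
    define S where "S = {j. ev j \<in> U}"
    have US: "U = WS S" using b[OF U] unfolding S_def .
    have cS: "closed S" using c[OF U] unfolding S_def .
    have iS: "i \<in> S" using i S_def by simp
    have sub: "cls i \<subseteq> S" using cS iS unfolding closed_def cls_def by blast
    show ?thesis unfolding S_def[symmetric]
    proof (rule ccontr)
      assume "S \<noteq> cls i"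
      then obtain k where k: "k \<in> S - cls i" using sub by blast
      have "direct_sum2 (WS (cls i \<union> (S - cls i))) (WS (cls i)) (WS (S - cls i))"
        by (rule ds2_WS) blast
      moreover have "cls i \<union> (S - cls i) = S" using sub by blast
      ultimately have ds2: "direct_sum2 U (WS (cls i)) (WS (S - cls i))" using US by simp
      have "subrep G \<rho> (WS (cls i))" "subrep G \<rho> (WS (S - cls i))"
        using subrep_WS closed_cls closed_diff_cls[OF cS] by blast+
      moreover have "WS (cls i) \<noteq> {0::'n\<Rightarrow>'k}" "WS (S - cls i) \<noteq> {0::'n\<Rightarrow>'k}"
        using WS_nz[OF in_cls] WS_nz[OF k] by blast+
      ultimately have "\<not> indecomposable G \<rho> U" using ds2 unfolding indecomposable_def by blast
      moreover have "indecomposable G \<rho> U" using val U by blast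
      ultimately show False by contradiction
    qed
  qed
  show "D = D0"
  proof
    show "D \<subseteq> D0"
    proof
      fix U assume U: "U \<in> D"
      have "indecomposable G \<rho> U" using val U by blast
      then have "U \<noteq> {0}" unfolding indecomposable_def by blast
      have "{j. ev j \<in> U} \<noteq> {}"
      proof
        assume "{j. ev j \<in> U} = {}"
        then have "WS {j. ev j \<in> U} = {0::'n\<Rightarrow>'k}" using WS_empty by simp
        then have "U = {0}" by (rule trans[OF b[OF U]])
        then show False using \<open>U \<noteq> {0}\<close> by contradiction
      qed
      then obtain i where i: "ev i \<in> U" by blast
      have "U = WS (cls i)" using b[OF U] unfolding e[OF U i] .
      then show "U \<in> D0" unfolding D0_def by blast
    qed
  next
    show "D0 \<subseteq> D"
    proof
      fix V assume "V \<in> D0"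
      then obtain i where V: "V = WS (cls i)" unfolding D0_def by blast
      obtain U where U: "U \<in> D" "ev i \<in> U" using a[of i] by blast
      have "U = WS (cls i)" using b[OF U(1)] unfolding e[OF U] .
      then show "V \<in> D" using U V by simp
    qed
  qed
qed

theorem main:
  "(indecomposable G \<rho> UNIV \<longleftrightarrow> transitive_on_basis_lines G \<rho>) \<and>
   (\<exists>!D. direct_sum UNIV D \<and> (\<forall>W\<in>D. subrep G \<rho> W \<and> free_submodule W \<and> indecomposable G \<rho> W))"
proof
  show "indecomposable G \<rho> UNIV \<longleftrightarrow> transitive_on_basis_lines G \<rho>" using part1a part1b by blast
  show "\<exists>!D. direct_sum UNIV D \<and> (\<forall>W\<in>D. subrep G \<rho> W \<and> free_submodule W \<and> indecomposable G \<rho> W)"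
  proof (rule ex1I[of _ D0])
    show "direct_sum UNIV D0 \<and> (\<forall>W\<in>D0. subrep G \<rho> W \<and> free_submodule W \<and> indecomposable G \<rho> W)"
      by (rule D0_valid)
  next
    fix D assume D: "direct_sum UNIV D \<and> (\<forall>W\<in>D. subrep G \<rho> W \<and> free_submodule W \<and> indecomposable G \<rho> W)"
    show "D = D0" using Dp[OF conjunct1[OF D] conjunct2[OF D]] .
  qed
qed

end

theorem proposition3p10:
  fixes G :: "('g, 'm) monoid_scheme"
    and \<rho> :: "'g \<Rightarrow> ('n::finite \<Rightarrow> 'k::comm_semiring_1) \<Rightarrow> ('n \<Rightarrow> 'k)"
  assumes "semifield TYPE('k)"
    and "zero_sum_free TYPE('k)"
    and "representation G \<rho>"
  shows "(indecomposable G \<rho> UNIV \<longleftrightarrow> transitive_on_basis_lines G \<rho>) \<and>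
         (\<exists>!D. direct_sum UNIV D \<and>
               (\<forall>W\<in>D. subrep G \<rho> W \<and> free_submodule W \<and> indecomposable G \<rho> W))"
proof -
  interpret r: rctx G \<rho> by (unfold_locales) (rule assms)+
  show ?thesis by (rule r.main)
qed

end
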